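(* Let $G$ be a graph of girth at least $5$ (every cycle of $G$, if any, has length at least $5$), and let $H$ be a maximal co-interval subgraph of $G$ with at least one edge. Then there is an edge $uv\in E(G)$ such that $E(H)=\delta_G(u)\cup\delta_G(v)$, i.e. $H$ is the $(u,v)$-ant of $G$.
   Context: All graphs are finite and simple. $\delta_G(x)$ is the set of edges of $G$ incident to $x$ and $N_G[x]$ the closed neighbourhood. For an edge $uv$, the $(u,v)$-ant of $G$ is the subgraph $(N_G[u]\cup N_G[v],\ \delta_G(u)\cup\delta_G(v))$. A graph is co-interval if its vertices can be assigned closed real intervals such that two distinct vertices are adjacent iff their intervals are disjoint. A co-interval subgraph $H$ of $G$ is maximal if no co-interval subgraph $H'$ of $G$ satisfies $E(H)\subsetneq E(H')$. *)

theory Defs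
  imports Complex_Main
begin

definition graph :: "'a set \<Rightarrow> 'a set set \<Rightarrow> bool" where
  "graph V E \<longleftrightarrow> finite V \<and> (\<forall>e\<in>E. e \<subseteq> V \<and> card e = 2)"

definition subgraph :: "'a set \<Rightarrow> 'a set set \<Rightarrow> 'a set \<Rightarrow> 'a set set \<Rightarrow> bool" where
  "subgraph V' E' V E \<longleftrightarrow> graph V' E' \<and> V' \<subseteq> V \<and> E' \<subseteq> E"

definition incident_edges :: "'a set set \<Rightarrow> 'a \<Rightarrow> 'a set set" where
  "incident_edges E x = {e \<in> E. x \<in> e}"

definition is_cycle :: "'a set \<Rightarrow> 'a set set \<Rightarrow> 'a list \<Rightarrow> bool" where
  "is_cycle V E cs \<longleftrightarrow> length cs \<ge> 3 \<and> distinct cs \<and> set cs \<subseteq> V \<and>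
     (\<forall>i < length cs. {cs ! i, cs ! ((i + 1) mod length cs)} \<in> E)"

definition girth_at_least :: "nat \<Rightarrow> 'a set \<Rightarrow> 'a set set \<Rightarrow> bool" where
  "girth_at_least k V E \<longleftrightarrow> (\<forall>cs. is_cycle V E cs \<longrightarrow> length cs \<ge> k)"

definition co_interval :: "'a set \<Rightarrow> 'a set set \<Rightarrow> bool" where
  "co_interval V E \<longleftrightarrow> (\<exists>l r :: 'a \<Rightarrow> real. (\<forall>x\<in>V. l x \<le> r x) \<and>
     (\<forall>x\<in>V. \<forall>y\<in>V. x \<noteq> y \<longrightarrow> ({x, y} \<in> E \<longleftrightarrow> {l x..r x} \<inter> {l y..r y} = {})))"

definition maximal_co_interval_subgraph ::
  "'a set \<Rightarrow> 'a set set \<Rightarrow> 'a set \<Rightarrow> 'a set set \<Rightarrow> bool" where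
  "maximal_co_interval_subgraph VH EH V E \<longleftrightarrow>
     subgraph VH EH V E \<and> co_interval VH EH \<and>
     \<not> (\<exists>V' E'. subgraph V' E' V E \<and> co_interval V' E' \<and> EH \<subset> E')"

end

theory Submission
  imports Defs
begin

lemma edge_props:
  assumes "graph V E" "{a,b} \<in> E"
  shows "a \<noteq> b \<and> a \<in> V \<and> b \<in> V"
proof -
  have "{a,b} \<subseteq> V" "card {a,b} = 2" using assms unfolding graph_def by auto
  then show ?thesis by (cases "a = b") auto
qed

lemma edge_form:
  assumes "graph V E" "e \<in> E"
  shows "\<exists>a b. a \<noteq> b \<and> e = {a,b}"
  using assms unfolding graph_def by (meson card_2_iff)

lemma cyc4:
  assumes "graph V E" "girth_at_least 5 V E"
    and "{a,b} \<in> E" "{b,c} \<in> E" "{c,d} \<in> E" "{d,a} \<in> E"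
    and "distinct [a,b,c,d]"
  shows False
proof -
  have V: "a \<in> V" "b \<in> V" "c \<in> V" "d \<in> V" using assms(1,3,5) edge_props by metis+
  have "\<forall>i<4. {[a,b,c,d] ! i, [a,b,c,d] ! ((i + 1) mod 4)} \<in> E"
  proof (intro allI impI)
    fix i :: nat assume "i < 4"
    then have "i = 0 \<or> i = 1 \<or> i = 2 \<or> i = 3" by linarith
    then show "{[a,b,c,d] ! i, [a,b,c,d] ! ((i + 1) mod 4)} \<in> E"
      using assms by (elim disjE) simp_all
  qed
  then have "is_cycle V E [a,b,c,d]" using V assms(7) unfolding is_cycle_def by auto
  then have "5 \<le> length [a,b,c,d]" using assms(2) unfolding girth_at_least_def by blast
  then show False by simp
qed

lemma cyc3:
  assumes "graph V E" "girth_at_least 5 V E"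
    and "{a,b} \<in> E" "{b,c} \<in> E" "{c,a} \<in> E"
  shows False
proof -
  have V: "a \<in> V" "b \<in> V" "c \<in> V" and d: "a \<noteq> b" "b \<noteq> c" "c \<noteq> a"
    using assms(1,3,4,5) edge_props by metis+
  have "\<forall>i<3. {[a,b,c] ! i, [a,b,c] ! ((i + 1) mod 3)} \<in> E"
  proof (intro allI impI)
    fix i :: nat assume "i < 3"
    then have "i = 0 \<or> i = 1 \<or> i = 2" by linarith
    then show "{[a,b,c] ! i, [a,b,c] ! ((i + 1) mod 3)} \<in> E"
      using assms by (elim disjE) simp_all
  qed
  then have "is_cycle V E [a,b,c]" using V d unfolding is_cycle_def by auto
  then have "5 \<le> length [a,b,c]" using assms(2) unfolding girth_at_least_def by blast
  then show False by simp
qed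

lemma disj_iff:
  fixes a b c d :: real
  assumes "a \<le> b" "c \<le> d"
  shows "{a..b} \<inter> {c..d} = {} \<longleftrightarrow> b < c \<or> d < a"
proof
  assume h: "{a..b} \<inter> {c..d} = {}"
  show "b < c \<or> d < a"
  proof (rule ccontr)
    assume "\<not> (b < c \<or> d < a)"
    then have "max a c \<in> {a..b} \<inter> {c..d}" using assms by auto
    then show False using h by auto
  qed
next
  assume "b < c \<or> d < a"
  then show "{a..b} \<inter> {c..d} = {}" by auto
qed

lemma ex_min_on:
  fixes f :: "'a \<Rightarrow> real"
  assumes "finite S" "S \<noteq> {}"
  shows "\<exists>u\<in>S. \<forall>z\<in>S. f u \<le> f z"
proof -
  have "Min (f ` S) \<in> f ` S" using assms by auto
  then obtain u where "u \<in> S" "f u = Min (f ` S)" by auto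
  moreover have "\<forall>z\<in>S. f z \<in> f ` S" by auto
  ultimately show ?thesis using assms by (metis Min_le Max_ge finite_imageI)
qed

lemma ex_max_on:
  fixes f :: "'a \<Rightarrow> real"
  assumes "finite S" "S \<noteq> {}"
  shows "\<exists>u\<in>S. \<forall>z\<in>S. f z \<le> f u"
proof -
  have "Max (f ` S) \<in> f ` S" using assms by auto
  then obtain u where "u \<in> S" "f u = Max (f ` S)" by auto
  moreover have "\<forall>z\<in>S. f z \<in> f ` S" by auto
  ultimately show ?thesis using assms by (metis Min_le Max_ge finite_imageI)
qed

theorem mainTheorem13:
  fixes V VH :: "'a set" and E EH :: "'a set set"
  assumes "graph V E"
    and "girth_at_least 5 V E"
    and "maximal_co_interval_subgraph VH EH V E"
    and "EH \<noteq> {}"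
  shows "\<exists>u v. {u, v} \<in> E \<and> EH = incident_edges E u \<union> incident_edges E v"
proof -
  have G: "graph V E" and gi: "girth_at_least 5 V E" using assms by auto
  have sg: "subgraph VH EH V E" and ci: "co_interval VH EH"
    and mx: "\<not> (\<exists>V' E'. subgraph V' E' V E \<and> co_interval V' E' \<and> EH \<subset> E')"
    using assms(3) unfolding maximal_co_interval_subgraph_def by auto
  have GH: "graph VH EH" and EHE: "EH \<subseteq> E" using sg unfolding subgraph_def by auto
  obtain l r :: "'a \<Rightarrow> real" where lr: "\<forall>x\<in>VH. l x \<le> r x"
    and iff: "\<forall>x\<in>VH. \<forall>y\<in>VH. x \<noteq> y \<longrightarrow> ({x, y} \<in> EH \<longleftrightarrow> {l x..r x} \<inter> {l y..r y} = {})"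
    using ci unfolding co_interval_def by blast
  have iff2: "{x, y} \<in> EH \<longleftrightarrow> r x < l y \<or> r y < l x" if "x \<in> VH" "y \<in> VH" "x \<noteq> y" for x y
    using iff that lr disj_iff by metis
  obtain e where "e \<in> EH" using assms(4) by auto
  then obtain a b where ab: "a \<noteq> b" "{a,b} \<in> EH" using edge_form[OF GH] by blast
  then have abV: "a \<in> VH" "b \<in> VH" using edge_props[OF GH] by auto
  have finH: "finite VH" and neH: "VH \<noteq> {}" using GH abV unfolding graph_def by auto
  obtain u where u: "u \<in> VH" "\<forall>z\<in>VH. r u \<le> r z" using ex_min_on[OF finH neH] by blast
  obtain v where v: "v \<in> VH" "\<forall>z\<in>VH. l z \<le> l v" using ex_max_on[OF finH neH] by blast
  have key: "u \<in> {x,y} \<or> v \<in> {x,y}" if xy: "x \<in> VH" "y \<in> VH" "r x < l y" for x y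
  proof (rule ccontr)
    assume n: "\<not> (u \<in> {x,y} \<or> v \<in> {x,y})"
    have ruy: "r u < l y" using u xy by force
    have rxv: "r x < l v" using v xy by force
    have "x \<noteq> y" using xy lr by force
    have "u \<noteq> v" using ruy v u xy lr by force
    have e1: "{u,y} \<in> E" using iff2[of u y] ruy u xy n EHE by auto
    have e2: "{y,x} \<in> E" using iff2[of y x] xy n EHE \<open>x \<noteq> y\<close> by auto
    have e3: "{x,v} \<in> E" using iff2[of x v] rxv v xy n EHE by auto
    have e4: "{v,u} \<in> E" using iff2[of v u] ruy rxv u v xy \<open>u \<noteq> v\<close> EHE
      by (smt (verit) subsetD)
    show False using cyc4[OF G gi e1 e2 e3 e4] n \<open>x \<noteq> y\<close> \<open>u \<noteq> v\<close> by auto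
  qed
  have "r a < l b \<or> r b < l a" using iff2 abV ab by auto
  then have "r u < l v" using u v abV by force
  then have "u \<noteq> v" using u lr by force
  then have uvE: "{u,v} \<in> E" using iff2[of u v] \<open>r u < l v\<close> u v EHE by auto
  define E' where "E' = incident_edges E u \<union> incident_edges E v"
  define V' where "V' = {x \<in> V. x = u \<or> x = v \<or> {u,x} \<in> E \<or> {v,x} \<in> E}"
  have sub: "EH \<subseteq> E'"
  proof
    fix e assume e: "e \<in> EH"
    then obtain x y where xy: "x \<noteq> y" "e = {x,y}" using edge_form[OF GH] by blast
    then have "x \<in> VH" "y \<in> VH" using edge_props[OF GH] e by auto
    then have "u \<in> e \<or> v \<in> e" using key iff2 xy e by blast
    then show "e \<in> E'" using e EHE unfolding E'_def incident_edges_def by auto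
  qed
  have tri: "False" if "{u,w} \<in> E" "{v,w} \<in> E" for w
    using cyc3[OF G gi uvE, of w] that by (simp add: insert_commute)
  have uV: "u \<in> V" "v \<in> V" using edge_props[OF G uvE] by auto
  have sg': "subgraph V' E' V E"
  proof -
    have "\<forall>e\<in>E'. e \<subseteq> V' \<and> card e = 2"
    proof
      fix e assume e: "e \<in> E'"
      then have eE: "e \<in> E" and ue: "u \<in> e \<or> v \<in> e" unfolding E'_def incident_edges_def by auto
      obtain x y where xy: "x \<noteq> y" "e = {x,y}" using edge_form[OF G eE] by blast
      have "x \<in> V" "y \<in> V" using edge_props[OF G] eE xy by auto
      then have "e \<subseteq> V'" using ue xy eE unfolding V'_def by (auto simp: insert_commute)
      then show "e \<subseteq> V' \<and> card e = 2" using G eE unfolding graph_def by auto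
    qed
    moreover have "finite V'" using G unfolding V'_def graph_def by auto
    moreover have "V' \<subseteq> V" "E' \<subseteq> E" unfolding V'_def E'_def incident_edges_def by auto
    ultimately show ?thesis unfolding subgraph_def graph_def by auto
  qed
  define L :: "'a \<Rightarrow> real" where "L z = (if z = u then 0 else if z = v then 3 else if {u,z} \<in> E then 1 else 0)" for z
  define R :: "'a \<Rightarrow> real" where "R z = (if z = u then 0 else if z = v then 3 else if {u,z} \<in> E then 3 else 2)" for z
  have LR: "L z \<le> R z" for z unfolding L_def R_def by auto
  have ci2: "{x, y} \<in> E' \<longleftrightarrow> {L x..R x} \<inter> {L y..R y} = {}"
    if x: "x \<in> V'" and y: "y \<in> V'" and xy: "x \<noteq> y" for x y
  proof -
    have cl: "(z = u \<and> L z = 0 \<and> R z = 0) \<or> (z = v \<and> L z = 3 \<and> R z = 3) \<or>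
       (z \<noteq> u \<and> z \<noteq> v \<and> {u,z} \<in> E \<and> {z,u} \<in> E \<and> {v,z} \<notin> E \<and> {z,v} \<notin> E \<and> L z = 1 \<and> R z = 3) \<or>
       (z \<noteq> u \<and> z \<noteq> v \<and> {u,z} \<notin> E \<and> {z,u} \<notin> E \<and> {v,z} \<in> E \<and> {z,v} \<in> E \<and> L z = 0 \<and> R z = 2)"
      if "z \<in> V'" for z
    proof -
      have "z = u \<or> z = v \<or> ({u,z} \<in> E \<and> {v,z} \<notin> E) \<or> ({u,z} \<notin> E \<and> {v,z} \<in> E)"
        using that tri unfolding V'_def by blast
      moreover have "{z,u} = {u,z}" "{z,v} = {v,z}" by auto
      ultimately show ?thesis using \<open>u \<noteq> v\<close> unfolding L_def R_def by auto
    qed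
    have Eq: "{x, y} \<in> E' \<longleftrightarrow> {x,y} \<in> E \<and> (x = u \<or> y = u \<or> x = v \<or> y = v)"
      unfolding E'_def incident_edges_def by auto
    have vu: "{v,u} \<in> E" using uvE by (simp add: insert_commute)
    have "{x, y} \<in> E' \<longleftrightarrow> R x < L y \<or> R y < L x"
      unfolding Eq
      using cl[OF x] cl[OF y] xy \<open>u \<noteq> v\<close> uvE vu
      by (elim disjE conjE) simp_all
    then show ?thesis using disj_iff[OF LR LR] by blast
  qed
  have ci': "co_interval V' E'"
    unfolding co_interval_def using LR ci2 by blast
  have "EH = E'" using mx sg' ci' sub by blast
  then show ?thesis using uvE unfolding E'_def by blast
qed

end
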